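(* Let $q=3^k$ for a positive integer $k$ and $n$ a positive integer. Let $S$ be a sequence of elements of $\mathbb{F}_q^n$ such that every subsequence $(g_1',g_2',g_3')$ of length $3$ satisfies $g_1'g_2'+g_2'g_3'+g_3'g_1'\neq 0$. Let $P:\mathbb{F}_q^n\times\mathbb{F}_q^n\times\mathbb{F}_q^n\to\mathbb{F}_q$ be $P(x,y,z)=\prod_{i=1}^{n} (1-(x_iy_i+y_iz_i+z_ix_i)^{q-1})$. Then $$|S|\leq 2(n+1)\,srk(P),$$ where the slice rank is taken for $P$ on the full domain $\mathbb{F}_q^n\times\mathbb{F}_q^n\times\mathbb{F}_q^n$.
   Context: Operations in $\mathbb{F}_q^n$ are coordinatewise. A sequence is a finite list with repetitions allowed; a subsequence of length $3$ is obtained by choosing $3$ distinct positions; $|S|$ is the length of $S$. A function $T:A^3\to\mathbb{F}$ (for a finite set $A$ and field $\mathbb{F}$) is a slice if it can be written as $T(x_1,x_2,x_3)=T_1(x_i)T_2(x_{i'},x_{i''})$ where $\{i,i',i''\}=\{1,2,3\}$, $T_1:A\to\mathbb{F}$, $T_2:A^2\to\mathbb{F}$. The slice rank $srk(T)$ is the smallest number $r$ such that $T$ is a linear combination of $r$ slices. *)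

theory Defs
  imports "HOL-Analysis.Analysis"
begin

definition is_slice :: "'a set \<Rightarrow> ('a \<Rightarrow> 'a \<Rightarrow> 'a \<Rightarrow> 'b::field) \<Rightarrow> bool" where
  "is_slice A T \<longleftrightarrow>
     (\<exists>T1 T2. \<forall>x\<in>A. \<forall>y\<in>A. \<forall>z\<in>A. T x y z = T1 x * T2 y z) \<or>
     (\<exists>T1 T2. \<forall>x\<in>A. \<forall>y\<in>A. \<forall>z\<in>A. T x y z = T1 y * T2 x z) \<or>
     (\<exists>T1 T2. \<forall>x\<in>A. \<forall>y\<in>A. \<forall>z\<in>A. T x y z = T1 z * T2 x y)"

definition slice_rank :: "'a set \<Rightarrow> ('a \<Rightarrow> 'a \<Rightarrow> 'a \<Rightarrow> 'b::field) \<Rightarrow> nat" where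
  "slice_rank A T = (LEAST r. \<exists>(c::nat \<Rightarrow> 'b) (f::nat \<Rightarrow> 'a \<Rightarrow> 'a \<Rightarrow> 'a \<Rightarrow> 'b).
      (\<forall>j<r. is_slice A (f j)) \<and>
      (\<forall>x\<in>A. \<forall>y\<in>A. \<forall>z\<in>A. T x y z = (\<Sum>j<r. c j * f j x y z)))"

end

theory Submission
  imports Defs "HOL-Number_Theory.Number_Theory"
begin

lemma slice_mono:
  assumes "is_slice A T" "B \<subseteq> A"
  shows "is_slice B T"
  using assms(1)[unfolded is_slice_def]
proof (elim disjE exE)
  fix T1 T2 assume h: "\<forall>x\<in>A. \<forall>y\<in>A. \<forall>z\<in>A. T x y z = T1 x * T2 y z"
  show ?thesis unfolding is_slice_def
    by (rule disjI1, rule exI[of _ T1], rule exI[of _ T2]) (use h assms(2) in blast)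
next
  fix T1 T2 assume h: "\<forall>x\<in>A. \<forall>y\<in>A. \<forall>z\<in>A. T x y z = T1 y * T2 x z"
  show ?thesis unfolding is_slice_def
    by (rule disjI2, rule disjI1, rule exI[of _ T1], rule exI[of _ T2]) (use h assms(2) in blast)
next
  fix T1 T2 assume h: "\<forall>x\<in>A. \<forall>y\<in>A. \<forall>z\<in>A. T x y z = T1 z * T2 x y"
  show ?thesis unfolding is_slice_def
    by (rule disjI2, rule disjI2, rule exI[of _ T1], rule exI[of _ T2]) (use h assms(2) in blast)
qed

lemma slice_scale:
  assumes "is_slice A T"
  shows "is_slice A (\<lambda>x y z. c * T x y z)"
  using assms[unfolded is_slice_def]
proof (elim disjE exE)
  fix T1 T2 assume h: "\<forall>x\<in>A. \<forall>y\<in>A. \<forall>z\<in>A. T x y z = T1 x * T2 y z"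
  show ?thesis unfolding is_slice_def
    by (rule disjI1, rule exI[of _ T1], rule exI[of _ "\<lambda>y z. c * T2 y z"]) (simp add: h)
next
  fix T1 T2 assume h: "\<forall>x\<in>A. \<forall>y\<in>A. \<forall>z\<in>A. T x y z = T1 y * T2 x z"
  show ?thesis unfolding is_slice_def
    by (rule disjI2, rule disjI1, rule exI[of _ T1], rule exI[of _ "\<lambda>y z. c * T2 y z"]) (simp add: h)
next
  fix T1 T2 assume h: "\<forall>x\<in>A. \<forall>y\<in>A. \<forall>z\<in>A. T x y z = T1 z * T2 x y"
  show ?thesis unfolding is_slice_def
    by (rule disjI2, rule disjI2, rule exI[of _ T1], rule exI[of _ "\<lambda>y z. c * T2 y z"]) (simp add: h)
qed

lemma slice_elim3:
  assumes "is_slice B s" "b \<in> B"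
  shows "is_slice B (\<lambda>x y z. s x y z - w z * s x y b)"
  using assms(1)[unfolded is_slice_def]
proof (elim disjE exE)
  fix T1 T2 assume h: "\<forall>x\<in>B. \<forall>y\<in>B. \<forall>z\<in>B. s x y z = T1 x * T2 y z"
  show ?thesis unfolding is_slice_def
    by (rule disjI1, rule exI[of _ T1], rule exI[of _ "\<lambda>y z. T2 y z - w z * T2 y b"])
       (simp add: h assms(2) algebra_simps)
next
  fix T1 T2 assume h: "\<forall>x\<in>B. \<forall>y\<in>B. \<forall>z\<in>B. s x y z = T1 y * T2 x z"
  show ?thesis unfolding is_slice_def
    by (rule disjI2, rule disjI1, rule exI[of _ T1], rule exI[of _ "\<lambda>x z. T2 x z - w z * T2 x b"])
       (simp add: h assms(2) algebra_simps)
next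
  fix T1 T2 assume h: "\<forall>x\<in>B. \<forall>y\<in>B. \<forall>z\<in>B. s x y z = T1 z * T2 x y"
  show ?thesis unfolding is_slice_def
    by (rule disjI2, rule disjI2, rule exI[of _ "\<lambda>z. T1 z - w z * T1 b"], rule exI[of _ T2])
       (simp add: h assms(2) algebra_simps)
qed

lemma slice_elim1:
  assumes "is_slice B s" "b \<in> B"
  shows "is_slice B (\<lambda>x y z. s x y z - w x * s b y z)"
  using assms(1)[unfolded is_slice_def]
proof (elim disjE exE)
  fix T1 T2 assume h: "\<forall>x\<in>B. \<forall>y\<in>B. \<forall>z\<in>B. s x y z = T1 x * T2 y z"
  show ?thesis unfolding is_slice_def
    by (rule disjI1, rule exI[of _ "\<lambda>x. T1 x - w x * T1 b"], rule exI[of _ T2])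
       (simp add: h assms(2) algebra_simps)
next
  fix T1 T2 assume h: "\<forall>x\<in>B. \<forall>y\<in>B. \<forall>z\<in>B. s x y z = T1 y * T2 x z"
  show ?thesis unfolding is_slice_def
    by (rule disjI2, rule disjI1, rule exI[of _ T1], rule exI[of _ "\<lambda>x z. T2 x z - w x * T2 b z"])
       (simp add: h assms(2) algebra_simps)
next
  fix T1 T2 assume h: "\<forall>x\<in>B. \<forall>y\<in>B. \<forall>z\<in>B. s x y z = T1 z * T2 x y"
  show ?thesis unfolding is_slice_def
    by (rule disjI2, rule disjI2, rule exI[of _ T1], rule exI[of _ "\<lambda>x y. T2 x y - w x * T2 b y"])
       (simp add: h assms(2) algebra_simps)
qed

lemma slice_elim2:
  assumes "is_slice B s" "b \<in> B"
  shows "is_slice B (\<lambda>x y z. s x y z - w y * s x b z)"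
  using assms(1)[unfolded is_slice_def]
proof (elim disjE exE)
  fix T1 T2 assume h: "\<forall>x\<in>B. \<forall>y\<in>B. \<forall>z\<in>B. s x y z = T1 x * T2 y z"
  show ?thesis unfolding is_slice_def
    by (rule disjI1, rule exI[of _ T1], rule exI[of _ "\<lambda>y z. T2 y z - w y * T2 b z"])
       (simp add: h assms(2) algebra_simps)
next
  fix T1 T2 assume h: "\<forall>x\<in>B. \<forall>y\<in>B. \<forall>z\<in>B. s x y z = T1 y * T2 x z"
  show ?thesis unfolding is_slice_def
    by (rule disjI2, rule disjI1, rule exI[of _ "\<lambda>y. T1 y - w y * T1 b"], rule exI[of _ T2])
       (simp add: h assms(2) algebra_simps)
next
  fix T1 T2 assume h: "\<forall>x\<in>B. \<forall>y\<in>B. \<forall>z\<in>B. s x y z = T1 z * T2 x y"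
  show ?thesis unfolding is_slice_def
    by (rule disjI2, rule disjI2, rule exI[of _ T1], rule exI[of _ "\<lambda>x y. T2 x y - w y * T2 x b"])
       (simp add: h assms(2) algebra_simps)
qed


lemma diag_bound:
  fixes f :: "'i \<Rightarrow> 'a \<Rightarrow> 'a \<Rightarrow> 'a \<Rightarrow> 'b::field"
  assumes "finite J" "finite B" "\<forall>x\<in>B. d x \<noteq> 0" "\<forall>j\<in>J. is_slice B (f j)"
    "\<forall>x\<in>B. \<forall>y\<in>B. \<forall>z\<in>B. (if x = y \<and> y = z then d x else 0) = (\<Sum>j\<in>J. f j x y z)"
  shows "card B \<le> card J"
  using assms
proof (induction "card J" arbitrary: J B f rule: less_induct)
  case less
  show ?case
  proof (cases "B = {}")
    case True
    then show ?thesis by simp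
  next
    case False
    have ex: "\<exists>j\<in>J. \<exists>x\<in>B. \<exists>y\<in>B. \<exists>z\<in>B. f j x y z \<noteq> 0"
    proof (rule ccontr)
      assume "\<not> ?thesis"
      then have z: "\<forall>j\<in>J. \<forall>x\<in>B. f j x x x = 0" by blast
      from False obtain b where b: "b \<in> B" by blast
      have "d b = (\<Sum>j\<in>J. f j b b b)" using less.prems(5) b by fastforce
      also have "\<dots> = 0" using z b by simp
      finally show False using less.prems(3) b by blast
    qed
    then obtain j x0 y0 z0 where j: "j \<in> J" and xyz0: "x0 \<in> B" "y0 \<in> B" "z0 \<in> B"
      and nz: "f j x0 y0 z0 \<noteq> 0" by blast
    have cJ: "card (J - {j}) < card J" using j less.prems(1) by (rule card_Diff1_less[rotated])
    have fJ: "finite (J - {j})" using less.prems(1) by simp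
    have dB: "\<forall>x\<in>B - {b}. d x \<noteq> 0" for b using less.prems(3) by blast
    have fB: "finite (B - {b})" for b using less.prems(2) by simp
    have cB: "b \<in> B \<Longrightarrow> card (B - {b}) = card B - 1" for b using less.prems(2) by simp
    have cJ1: "card (J - {j}) = card J - 1" using j less.prems(1) by simp
    have B1: "card B \<ge> 1" using False less.prems(2) by (simp add: Suc_le_eq card_gt_0_iff)
    have J1: "card J \<ge> 1" using j less.prems(1) by (auto simp: Suc_le_eq card_gt_0_iff)
    from less.prems(4) j have "is_slice B (f j)" by blast
    then consider
        (t1) T1 T2 where "\<forall>x\<in>B. \<forall>y\<in>B. \<forall>z\<in>B. f j x y z = T1 x * T2 y z"
      | (t2) T1 T2 where "\<forall>x\<in>B. \<forall>y\<in>B. \<forall>z\<in>B. f j x y z = T1 y * T2 x z"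
      | (t3) T1 T2 where "\<forall>x\<in>B. \<forall>y\<in>B. \<forall>z\<in>B. f j x y z = T1 z * T2 x y"
      unfolding is_slice_def by blast
    then show ?thesis
    proof cases
      case (t3 u g)
      define b where "b = z0"
      have b: "b \<in> B" using xyz0 b_def by simp
      have ub: "u b \<noteq> 0" using nz t3 xyz0 b_def by auto
      define f' where "f' = (\<lambda>i x y z. f i x y z - (u z / u b) * f i x y b)"
      have sl: "\<forall>i\<in>J - {j}. is_slice (B - {b}) (f' i)"
      proof (intro ballI)
        fix i assume "i \<in> J - {j}"
        then have "is_slice B (f i)" using less.prems(4) by blast
        then have "is_slice B (f' i)" unfolding f'_def by (rule slice_elim3[OF _ b])
        then show "is_slice (B - {b}) (f' i)" by (rule slice_mono) blast
      qed
      have eq: "\<forall>x\<in>B - {b}. \<forall>y\<in>B - {b}. \<forall>z\<in>B - {b}.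
          (if x = y \<and> y = z then d x else 0) = (\<Sum>i\<in>J - {j}. f' i x y z)"
      proof (intro ballI)
        fix x y z assume xyz: "x \<in> B - {b}" "y \<in> B - {b}" "z \<in> B - {b}"
        have fj0: "f' j x y z = 0" using t3 xyz b ub unfolding f'_def by auto
        have "(\<Sum>i\<in>J. f' i x y z) = (\<Sum>i\<in>J. f i x y z) - (u z / u b) * (\<Sum>i\<in>J. f i x y b)"
          unfolding f'_def by (simp add: sum_subtractf sum_distrib_left)
        also have "(\<Sum>i\<in>J. f i x y b) = 0"
          using less.prems(5) xyz b by (metis (no_types, lifting) DiffD1 DiffD2 insertI1)
        also have "(\<Sum>i\<in>J. f i x y z) = (if x = y \<and> y = z then d x else 0)"
          using less.prems(5) xyz by (metis DiffD1)
        finally have "(\<Sum>i\<in>J. f' i x y z) = (if x = y \<and> y = z then d x else 0)" by simp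
        moreover have "(\<Sum>i\<in>J. f' i x y z) = f' j x y z + (\<Sum>i\<in>J - {j}. f' i x y z)"
          using j less.prems(1) by (simp add: sum.remove)
        ultimately show "(if x = y \<and> y = z then d x else 0) = (\<Sum>i\<in>J - {j}. f' i x y z)"
          using fj0 by simp
      qed
      have "card (B - {b}) \<le> card (J - {j})"
        using less.hyps[OF cJ fJ fB dB sl eq] .
      then show ?thesis using cB[OF b] cJ1 B1 J1 by simp
    next
      case (t1 u g)
      define b where "b = x0"
      have b: "b \<in> B" using xyz0 b_def by simp
      have ub: "u b \<noteq> 0" using nz t1 xyz0 b_def by auto
      define f' where "f' = (\<lambda>i x y z. f i x y z - (u x / u b) * f i b y z)"
      have sl: "\<forall>i\<in>J - {j}. is_slice (B - {b}) (f' i)"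
      proof (intro ballI)
        fix i assume "i \<in> J - {j}"
        then have "is_slice B (f i)" using less.prems(4) by blast
        then have "is_slice B (f' i)" unfolding f'_def by (rule slice_elim1[OF _ b])
        then show "is_slice (B - {b}) (f' i)" by (rule slice_mono) blast
      qed
      have eq: "\<forall>x\<in>B - {b}. \<forall>y\<in>B - {b}. \<forall>z\<in>B - {b}.
          (if x = y \<and> y = z then d x else 0) = (\<Sum>i\<in>J - {j}. f' i x y z)"
      proof (intro ballI)
        fix x y z assume xyz: "x \<in> B - {b}" "y \<in> B - {b}" "z \<in> B - {b}"
        have fj0: "f' j x y z = 0" using t1 xyz b ub unfolding f'_def by auto
        have "(\<Sum>i\<in>J. f' i x y z) = (\<Sum>i\<in>J. f i x y z) - (u x / u b) * (\<Sum>i\<in>J. f i b y z)"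
          unfolding f'_def by (simp add: sum_subtractf sum_distrib_left)
        also have "(\<Sum>i\<in>J. f i b y z) = 0"
          using less.prems(5) xyz b by (metis (no_types, lifting) DiffD1 DiffD2 insertI1)
        also have "(\<Sum>i\<in>J. f i x y z) = (if x = y \<and> y = z then d x else 0)"
          using less.prems(5) xyz by (metis DiffD1)
        finally have "(\<Sum>i\<in>J. f' i x y z) = (if x = y \<and> y = z then d x else 0)" by simp
        moreover have "(\<Sum>i\<in>J. f' i x y z) = f' j x y z + (\<Sum>i\<in>J - {j}. f' i x y z)"
          using j less.prems(1) by (simp add: sum.remove)
        ultimately show "(if x = y \<and> y = z then d x else 0) = (\<Sum>i\<in>J - {j}. f' i x y z)"
          using fj0 by simp
      qed
      have "card (B - {b}) \<le> card (J - {j})"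
        using less.hyps[OF cJ fJ fB dB sl eq] .
      then show ?thesis using cB[OF b] cJ1 B1 J1 by simp
    next
      case (t2 u g)
      define b where "b = y0"
      have b: "b \<in> B" using xyz0 b_def by simp
      have ub: "u b \<noteq> 0" using nz t2 xyz0 b_def by auto
      define f' where "f' = (\<lambda>i x y z. f i x y z - (u y / u b) * f i x b z)"
      have sl: "\<forall>i\<in>J - {j}. is_slice (B - {b}) (f' i)"
      proof (intro ballI)
        fix i assume "i \<in> J - {j}"
        then have "is_slice B (f i)" using less.prems(4) by blast
        then have "is_slice B (f' i)" unfolding f'_def by (rule slice_elim2[OF _ b])
        then show "is_slice (B - {b}) (f' i)" by (rule slice_mono) blast
      qed
      have eq: "\<forall>x\<in>B - {b}. \<forall>y\<in>B - {b}. \<forall>z\<in>B - {b}.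
          (if x = y \<and> y = z then d x else 0) = (\<Sum>i\<in>J - {j}. f' i x y z)"
      proof (intro ballI)
        fix x y z assume xyz: "x \<in> B - {b}" "y \<in> B - {b}" "z \<in> B - {b}"
        have fj0: "f' j x y z = 0" using t2 xyz b ub unfolding f'_def by auto
        have "(\<Sum>i\<in>J. f' i x y z) = (\<Sum>i\<in>J. f i x y z) - (u y / u b) * (\<Sum>i\<in>J. f i x b z)"
          unfolding f'_def by (simp add: sum_subtractf sum_distrib_left)
        also have "(\<Sum>i\<in>J. f i x b z) = 0"
          using less.prems(5) xyz b by (metis (no_types, lifting) DiffD1 DiffD2 insertI1)
        also have "(\<Sum>i\<in>J. f i x y z) = (if x = y \<and> y = z then d x else 0)"
          using less.prems(5) xyz by (metis DiffD1)
        finally have "(\<Sum>i\<in>J. f' i x y z) = (if x = y \<and> y = z then d x else 0)" by simp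
        moreover have "(\<Sum>i\<in>J. f' i x y z) = f' j x y z + (\<Sum>i\<in>J - {j}. f' i x y z)"
          using j less.prems(1) by (simp add: sum.remove)
        ultimately show "(if x = y \<and> y = z then d x else 0) = (\<Sum>i\<in>J - {j}. f' i x y z)"
          using fj0 by simp
      qed
      have "card (B - {b}) \<le> card (J - {j})"
        using less.hyps[OF cJ fJ fB dB sl eq] .
      then show ?thesis using cB[OF b] cJ1 B1 J1 by simp
    qed
  qed
qed


lemma slice_rank_exists:
  fixes T :: "'a \<Rightarrow> 'a \<Rightarrow> 'a \<Rightarrow> 'b::field"
  assumes "finite A"
  shows "\<exists>r (c::nat \<Rightarrow> 'b) (f::nat \<Rightarrow> 'a \<Rightarrow> 'a \<Rightarrow> 'a \<Rightarrow> 'b).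
      (\<forall>j<r. is_slice A (f j)) \<and>
      (\<forall>x\<in>A. \<forall>y\<in>A. \<forall>z\<in>A. T x y z = (\<Sum>j<r. c j * f j x y z))"
proof -
  have "\<exists>(n::nat) e. A = e ` {i. i < n} \<and> inj_on e {i. i < n}"
    by (rule finite_imp_nat_seg_image_inj_on[OF assms])
  then obtain n :: nat and e where ne: "A = e ` {i. i < n} \<and> inj_on e {i. i < n}" by iprover
  then have Ae: "A = e ` {i. i < n}" and inj: "inj_on e {i. i < n}" by auto
  define f where "f = (\<lambda>j x y z. (if x = e j then 1 else 0) * T (e j) y z)"
  have sl: "\<forall>j<n. is_slice A (f j)"
  proof (intro allI impI)
    fix j
    show "is_slice A (f j)" unfolding is_slice_def f_def
      by (rule disjI1, rule exI[of _ "\<lambda>x. if x = e j then 1 else 0"],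
          rule exI[of _ "\<lambda>y z. T (e j) y z"]) simp
  qed
  have eq: "\<forall>x\<in>A. \<forall>y\<in>A. \<forall>z\<in>A. T x y z = (\<Sum>j<n. 1 * f j x y z)"
  proof (intro ballI)
    fix x y z assume x: "x \<in> A"
    define g where "g = (\<lambda>a. if x = a then T a y z else 0)"
    have "(\<Sum>j<n. 1 * f j x y z) = (\<Sum>j\<in>{i. i < n}. g (e j))"
      unfolding f_def g_def by (intro sum.cong) auto
    also have "\<dots> = (\<Sum>a\<in>e ` {i. i < n}. g a)"
      using sum.reindex[OF inj, of g] by simp
    also have "\<dots> = T x y z" unfolding g_def using x Ae by (simp add: sum.delta)
    finally show "T x y z = (\<Sum>j<n. 1 * f j x y z)" by simp
  qed
  show ?thesis
    by (rule exI[of _ n], rule exI[of _ "\<lambda>_. (1::'b)"], rule exI[of _ f]) (use sl eq in simp)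
qed

lemma slice_rank_ge:
  fixes T :: "'a \<Rightarrow> 'a \<Rightarrow> 'a \<Rightarrow> 'b::field"
  assumes "finite A" "B \<subseteq> A" "\<forall>x\<in>B. d x \<noteq> 0"
    "\<forall>x\<in>B. \<forall>y\<in>B. \<forall>z\<in>B. T x y z = (if x = y \<and> y = z then d x else 0)"
  shows "card B \<le> slice_rank A T"
proof -
  let ?Q = "\<lambda>r. \<exists>(c::nat \<Rightarrow> 'b) (f::nat \<Rightarrow> 'a \<Rightarrow> 'a \<Rightarrow> 'a \<Rightarrow> 'b).
      (\<forall>j<r. is_slice A (f j)) \<and>
      (\<forall>x\<in>A. \<forall>y\<in>A. \<forall>z\<in>A. T x y z = (\<Sum>j<r. c j * f j x y z))"
  have "?Q (slice_rank A T)"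
    unfolding slice_rank_def by (rule LeastI_ex, rule slice_rank_exists[OF assms(1)])
  then obtain c f where cf: "(\<forall>j<slice_rank A T. is_slice A (f j)) \<and>
    (\<forall>x\<in>A. \<forall>y\<in>A. \<forall>z\<in>A. T x y z = (\<Sum>j<slice_rank A T. c j * f j x y z))"
    by iprover
  then have sl: "\<forall>j<slice_rank A T. is_slice A (f j)"
    and eq: "\<forall>x\<in>A. \<forall>y\<in>A. \<forall>z\<in>A. T x y z = (\<Sum>j<slice_rank A T. c j * f j x y z)"
    by auto
  have fB: "finite B" using assms(1,2) finite_subset by blast
  have "card B \<le> card {..<slice_rank A T}"
  proof (rule diag_bound[where f = "\<lambda>j x y z. c j * f j x y z" and d = d])
    show "finite {..<slice_rank A T}" by simp
    show "finite B" by (fact fB)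
    show "\<forall>x\<in>B. d x \<noteq> 0" by (fact assms(3))
    show "\<forall>j\<in>{..<slice_rank A T}. is_slice B (\<lambda>x y z. c j * f j x y z)"
    proof (intro ballI)
      fix j assume "j \<in> {..<slice_rank A T}"
      then have "is_slice A (f j)" using sl by simp
      then have "is_slice A (\<lambda>x y z. c j * f j x y z)" by (rule slice_scale)
      then show "is_slice B (\<lambda>x y z. c j * f j x y z)" by (rule slice_mono[OF _ assms(2)])
    qed
    show "\<forall>x\<in>B. \<forall>y\<in>B. \<forall>z\<in>B. (if x = y \<and> y = z then d x else 0) =
        (\<Sum>j\<in>{..<slice_rank A T}. c j * f j x y z)"
    proof (intro ballI)
      fix x y z assume xyz: "x \<in> B" "y \<in> B" "z \<in> B"
      then have xyzA: "x \<in> A" "y \<in> A" "z \<in> A" using assms(2) by auto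
      have "T x y z = (\<Sum>j<slice_rank A T. c j * f j x y z)" using eq xyzA by blast
      moreover have "T x y z = (if x = y \<and> y = z then d x else 0)" using assms(4) xyz by blast
      ultimately show "(if x = y \<and> y = z then d x else 0) =
        (\<Sum>j\<in>{..<slice_rank A T}. c j * f j x y z)" by simp
    qed
  qed
  then show ?thesis by simp
qed


lemma three_elems:
  assumes "3 \<le> card X"
  shows "\<exists>i j l. i \<in> X \<and> j \<in> X \<and> l \<in> X \<and> i \<noteq> j \<and> j \<noteq> l \<and> i \<noteq> l"
proof -
  have "Suc 2 \<le> card X" using assms by simp
  then obtain i X1 where X1: "X = insert i X1" "i \<notin> X1" "2 \<le> card X1" "finite X1"
    using card_le_Suc_iff[of 2 X] by blast
  then have "Suc 1 \<le> card X1" by simp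
  then obtain j X2 where X2: "X1 = insert j X2" "j \<notin> X2" "1 \<le> card X2" "finite X2"
    using card_le_Suc_iff[of 1 X1] by blast
  then have "Suc 0 \<le> card X2" by simp
  then obtain l X3 where X3: "X2 = insert l X3" "l \<notin> X3"
    using card_le_Suc_iff[of 0 X2] by blast
  show ?thesis using X1 X2 X3 by blast
qed

lemma char3:
  assumes "k > 0" and "CARD('a::{field,finite}) = 3 ^ k"
  shows "(3::'a) = 0"
proof -
  have "CHAR('a) dvd 3 ^ k" using CHAR_dvd_CARD[where 'a='a] assms(2) by simp
  moreover have "CHAR('a) > 0" by (rule finite_imp_CHAR_pos) simp
  then have "prime CHAR('a)" by (rule prime_CHAR_semidom)
  ultimately have "CHAR('a) dvd 3" using prime_dvd_power by blast
  then have "of_nat 3 = (0::'a)" by (simp only: of_nat_eq_0_iff_char_dvd)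
  then show ?thesis by simp
qed

lemma fermat_field:
  fixes a :: "'a::{field,finite}"
  assumes a: "a \<noteq> 0"
  shows "a ^ (CARD('a) - 1) = 1"
proof -
  have "(\<Prod>y\<in>UNIV-{0}. a * y) = (\<Prod>y\<in>UNIV-{0}. y)"
    by (rule prod.reindex_bij_witness[of _ "\<lambda>y. y / a" "\<lambda>y. a * y"]) (use a in auto)
  moreover have "(\<Prod>y\<in>UNIV-{0}. a * y) = a ^ card (UNIV - {0::'a}) * (\<Prod>y\<in>UNIV-{0}. y)"
    by (simp add: prod.distrib)
  moreover have "card (UNIV - {0::'a}) = CARD('a) - 1" by (simp add: card_Diff_singleton)
  moreover have "(\<Prod>y\<in>UNIV-{0::'a}. y) \<noteq> 0" by simp
  ultimately show ?thesis by (metis mult_cancel_right2)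
qed

theorem corollary4p10:
  fixes S :: "('a::{field,finite} ^ 'n) list" and k :: nat
  assumes "k > 0" and "CARD('a) = 3 ^ k"
    and "\<forall>i j l. i < length S \<and> j < length S \<and> l < length S \<and> i \<noteq> j \<and> j \<noteq> l \<and> i \<noteq> l
            \<longrightarrow> S ! i * S ! j + S ! j * S ! l + S ! l * S ! i \<noteq> 0"
  shows "length S \<le> 2 * (CARD('n) + 1) *
           slice_rank (UNIV :: ('a ^ 'n) set)
             (\<lambda>x y z. \<Prod>i\<in>UNIV. (1 - (x $ i * y $ i + y $ i * z $ i + z $ i * x $ i) ^ (CARD('a) - 1)))"
proof -
  have "3 ^ 1 \<le> (3::nat) ^ k" by (rule power_increasing) (use assms(1) in auto)
  then have q3: "CARD('a) \<ge> 3" using assms(2) by simp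
  have three: "(3::'a) = 0" by (rule char3[OF assms(1,2)])
  have t3: "b + b + b = 0" for b :: 'a
  proof -
    have "b + b + b = (1 + 1 + 1) * b" by (simp only: distrib_right mult_1_left)
    also have "\<dots> = 0" using three by simp
    finally show ?thesis .
  qed
  have trip: "a * a + a * a + a * a = 0" for a :: 'a by (rule t3)
  have pairid: "a * a + a * b + b * a = a * (a - b)" for a b :: 'a
  proof -
    have "a * a + a * b + b * a = a * (a - b) + (a * b + a * b + a * b)" by (simp add: algebra_simps)
    then show ?thesis using t3[of "a * b"] by simp
  qed
  have zpow: "(0::'a) ^ (CARD('a) - 1) = 0" using q3 by simp
  define P where "P = (\<lambda>x y z :: 'a ^ 'n. \<Prod>i\<in>UNIV. (1 - (x $ i * y $ i + y $ i * z $ i + z $ i * x $ i) ^ (CARD('a) - 1)))"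
  have P0: "P x y z = 0" if c: "x $ c * y $ c + y $ c * z $ c + z $ c * x $ c \<noteq> 0" for x y z c
  proof -
    have "(1 - (x $ c * y $ c + y $ c * z $ c + z $ c * x $ c) ^ (CARD('a) - 1)) = 0"
      using fermat_field[OF c] by simp
    then show ?thesis unfolding P_def by (intro prod_zero) auto
  qed
  have P1: "P x x x = 1" for x
    unfolding P_def trip zpow by simp
  define A where "A = set S"
  define I where "I a = {i. i < length S \<and> S ! i = a}" for a
  have I2: "card (I a) \<le> 2" for a
  proof (rule ccontr)
    assume "\<not> card (I a) \<le> 2"
    then have "3 \<le> card (I a)" by simp
    then obtain i j l where ijl: "i \<in> I a" "j \<in> I a" "l \<in> I a" "i \<noteq> j" "j \<noteq> l" "i \<noteq> l"
      using three_elems by blast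
    then have "i < length S \<and> j < length S \<and> l < length S \<and> i \<noteq> j \<and> j \<noteq> l \<and> i \<noteq> l"
      unfolding I_def by simp
    then have "S ! i * S ! j + S ! j * S ! l + S ! l * S ! i \<noteq> 0" by (rule assms(3)[rule_format])
    moreover have "S ! i * S ! j + S ! j * S ! l + S ! l * S ! i = a * a + a * a + a * a"
      using ijl unfolding I_def by simp
    moreover have "a * a + a * a + a * a = (0 :: 'a ^ 'n)"
      unfolding vec_eq_iff using trip by simp
    ultimately show False by simp
  qed
  have lenA: "length S \<le> 2 * card A"
  proof -
    have "{..<length S} = (\<Union>a\<in>A. I a)" unfolding A_def I_def by auto
    then have "card {..<length S} = card (\<Union>a\<in>A. I a)" by (rule arg_cong)
    then have "length S = card (\<Union>a\<in>A. I a)" by simp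
    also have "\<dots> = (\<Sum>a\<in>A. card (I a))"
      by (rule card_UN_disjoint) (auto simp: A_def I_def)
    also have "\<dots> \<le> (\<Sum>a\<in>A. 2)" by (rule sum_mono) (rule I2)
    finally show ?thesis by simp
  qed
  define sp where "sp x = card {i. x $ i \<noteq> (0::'a)}" for x :: "'a ^ 'n"
  have spN: "sp x \<le> CARD('n)" for x unfolding sp_def by (rule card_mono) auto
  define N where "N = CARD('n)"
  have "\<exists>s0. card A \<le> (N + 1) * card {x\<in>A. sp x = s0}"
  proof (rule ccontr)
    assume "\<not> ?thesis"
    then have lt: "(N + 1) * card {x\<in>A. sp x = s} < card A" for s using not_le by blast
    have "A = (\<Union>s\<in>{..N}. {x\<in>A. sp x = s})" using spN unfolding N_def by auto
    then have "card A = card (\<Union>s\<in>{..N}. {x\<in>A. sp x = s})" by simp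
    also have "\<dots> = (\<Sum>s\<in>{..N}. card {x\<in>A. sp x = s})"
      by (rule card_UN_disjoint) (auto simp: A_def)
    finally have cA: "card A = (\<Sum>s\<in>{..N}. card {x\<in>A. sp x = s})" .
    have "(N + 1) * card A = (\<Sum>s\<in>{..N}. (N + 1) * card {x\<in>A. sp x = s})"
      by (simp add: cA sum_distrib_left)
    also have "\<dots> < (\<Sum>s\<in>{..N}. card A)"
    proof (rule sum_strict_mono)
      show "finite {..N}" by simp
      show "{..N} \<noteq> {}" by auto
      fix s assume "s \<in> {..N}"
      show "(N + 1) * card {x\<in>A. sp x = s} < card A" by (rule lt)
    qed
    also have "\<dots> = (N + 1) * card A" by simp
    finally show False by simp
  qed
  then obtain s0 where s0: "card A \<le> (N + 1) * card {x\<in>A. sp x = s0}" by blast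
  define B where "B = {x\<in>A. sp x = s0}"
  have pair: "\<exists>c. x $ c * x $ c + x $ c * z $ c + z $ c * x $ c \<noteq> 0"
    if xz: "x \<in> B" "z \<in> B" "x \<noteq> z" for x z
  proof (rule ccontr)
    assume nc: "\<not> (\<exists>c. x $ c * x $ c + x $ c * z $ c + z $ c * x $ c \<noteq> 0)"
    have h: "x $ c = 0 \<or> x $ c = z $ c" for c
    proof -
      have "x $ c * x $ c + x $ c * z $ c + z $ c * x $ c = 0" using nc by blast
      then have "x $ c * (x $ c - z $ c) = 0" by (simp only: pairid)
      then show ?thesis by simp
    qed
    have sub: "{i. x $ i \<noteq> 0} \<subseteq> {i. z $ i \<noteq> 0}" 
    proof
      fix i assume "i \<in> {i. x $ i \<noteq> 0}"
      then have xi: "x $ i \<noteq> 0" by simp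
      then have "x $ i = z $ i" using h[of i] by simp
      then show "i \<in> {i. z $ i \<noteq> 0}" using xi by simp
    qed
    have "card {i. x $ i \<noteq> 0} = card {i. z $ i \<noteq> 0}" using xz unfolding B_def sp_def by simp
    then have eqs: "{i. x $ i \<noteq> 0} = {i. z $ i \<noteq> 0}" using sub by (intro card_subset_eq) simp_all
    have "x = z"
    proof (subst vec_eq_iff, intro allI)
      fix c show "x $ c = z $ c"
      proof (cases "x $ c = 0")
        case True
        then have "c \<notin> {i. x $ i \<noteq> 0}" by simp
        then have "c \<notin> {i. z $ i \<noteq> 0}" unfolding eqs .
        then have "z $ c = 0" by simp
        then show ?thesis using True by simp
      next
        case False
        then show ?thesis using h[of c] by simp
      qed
    qed
    then show False using xz by simp
  qed
  have triple: "\<exists>c. x $ c * y $ c + y $ c * z $ c + z $ c * x $ c \<noteq> 0"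
    if xyz: "x \<in> A" "y \<in> A" "z \<in> A" "x \<noteq> y" "y \<noteq> z" "x \<noteq> z" for x y z
  proof -
    obtain i where i: "i < length S" "S ! i = x" using xyz(1) unfolding A_def by (auto simp: in_set_conv_nth)
    obtain j where j: "j < length S" "S ! j = y" using xyz(2) unfolding A_def by (auto simp: in_set_conv_nth)
    obtain l where l: "l < length S" "S ! l = z" using xyz(3) unfolding A_def by (auto simp: in_set_conv_nth)
    have "i \<noteq> j" "j \<noteq> l" "i \<noteq> l" using i j l xyz by auto
    then have "i < length S \<and> j < length S \<and> l < length S \<and> i \<noteq> j \<and> j \<noteq> l \<and> i \<noteq> l"
      using i j l by simp
    then have "S ! i * S ! j + S ! j * S ! l + S ! l * S ! i \<noteq> 0" by (rule assms(3)[rule_format])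
    then have "x * y + y * z + z * x \<noteq> 0" using i j l by simp
    then obtain c where "(x * y + y * z + z * x) $ c \<noteq> 0" by (auto simp: vec_eq_iff)
    then show ?thesis by auto
  qed
  have diag: "\<forall>x\<in>B. \<forall>y\<in>B. \<forall>z\<in>B. P x y z = (if x = y \<and> y = z then 1 else 0)"
  proof (intro ballI)
    fix x y z assume xyz: "x \<in> B" "y \<in> B" "z \<in> B"
    have xyzA: "x \<in> A" "y \<in> A" "z \<in> A" using xyz unfolding B_def by auto
    show "P x y z = (if x = y \<and> y = z then 1 else 0)"
    proof (cases "x = y \<and> y = z")
      case True
      then show ?thesis using P1 by simp
    next
      case False
      have "\<exists>c. x $ c * y $ c + y $ c * z $ c + z $ c * x $ c \<noteq> 0"
      proof (cases "x = y")
        case True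
        then have "x \<noteq> z" using False by simp
        then obtain c where "x $ c * x $ c + x $ c * z $ c + z $ c * x $ c \<noteq> 0"
          using pair xyz by blast
        then show ?thesis using True by blast
      next
        case xy: False
        show ?thesis
        proof (cases "y = z")
          case True
          obtain c where "z $ c * z $ c + z $ c * x $ c + x $ c * z $ c \<noteq> 0"
            using pair[of z x] xyz xy True by blast
          then have "x $ c * y $ c + y $ c * z $ c + z $ c * x $ c \<noteq> 0"
            using True by (simp add: ac_simps)
          then show ?thesis by blast
        next
          case yz: False
          show ?thesis
          proof (cases "x = z")
            case True
            obtain c where "x $ c * x $ c + x $ c * y $ c + y $ c * x $ c \<noteq> 0"
              using pair[of x y] xyz xy by blast
            then have "x $ c * y $ c + y $ c * z $ c + z $ c * x $ c \<noteq> 0"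
              using True by (simp add: ac_simps)
            then show ?thesis by blast
          next
            case False
            then show ?thesis using triple xyzA xy yz by blast
          qed
        qed
      qed
      then obtain c where "x $ c * y $ c + y $ c * z $ c + z $ c * x $ c \<noteq> 0" by blast
      then have "P x y z = 0" by (rule P0)
      then show ?thesis using False by simp
    qed
  qed
  have cB: "card B \<le> slice_rank (UNIV :: ('a ^ 'n) set) P"
    by (rule slice_rank_ge[where d = "\<lambda>_. 1"]) (use diag in auto)
  have "length S \<le> 2 * ((N + 1) * card B)" using lenA s0 unfolding B_def by linarith
  also have "\<dots> \<le> 2 * ((N + 1) * slice_rank (UNIV :: ('a ^ 'n) set) P)" using cB by (intro mult_le_mono2)
  finally show ?thesis unfolding P_def N_def by (simp add: mult.assoc)
qed

end
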